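(* Let $N\ge 2$ be an integer and $a\in\mathbb{C}$ a constant. Let $\zeta_1(\tau),\dots,\zeta_N(\tau)$ be (complex-valued) solutions, on a domain of the independent variable $\tau$ on which $\zeta_n(\tau)\neq\zeta_m(\tau)$ for all $n\neq m$, of the system $$\zeta_n''=2\sum_{m=1,\,m\neq n}^{N} a\,\frac{\zeta_n'\,\zeta_m'}{\zeta_n-\zeta_m},\qquad n=1,\dots,N,$$ where primes denote differentiation with respect to $\tau$. Define the monic polynomial $$\Pi(\zeta,\tau)=\prod_{n=1}^{N}\bigl(\zeta-\zeta_n(\tau)\bigr)=\zeta^N+\sum_{m=1}^{N}\gamma_m(\tau)\,\zeta^{N-m}.$$ Then $\Pi$ satisfies the nonlinear PDE $$\Pi_{\tau\tau}\,(\Pi_\zeta)^2+(1-a)\Bigl\{\Pi_{\zeta\zeta}\,(\Pi_\tau)^2-\Pi_\zeta\,\bigl[(\Pi_\tau)^2\bigr]_\zeta\Bigr\}=\Psi\,\Pi,$$ where $\Psi(\zeta,\tau)$ is a polynomial in $\zeta$ of degree (at most) $2N-4$, with coefficients depending on $\tau$.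
   Context: Subscripts on $\Pi$ denote partial derivatives, e.g. $\Pi_\zeta=\partial\Pi/\partial\zeta$, $\Pi_{\tau\tau}=\partial^2\Pi/\partial\tau^2$. The coefficients $\gamma_m(\tau)$ are the coefficients of $\Pi$ as a polynomial in $\zeta$ (so they are the elementary symmetric functions of the $\zeta_n$ up to sign). *)

theory Defs
  imports "HOL-Complex_Analysis.Complex_Analysis" "HOL-Computational_Algebra.Polynomial"
begin

definition Pi_poly :: "nat \<Rightarrow> (nat \<Rightarrow> complex \<Rightarrow> complex) \<Rightarrow> complex \<Rightarrow> complex \<Rightarrow> complex" where
  "Pi_poly N z \<zeta> \<tau> = (\<Prod>n\<in>{1..N}. (\<zeta> - z n \<tau>))"

end

theory Submission
  imports Defs
begin

definition PP :: "nat set \<Rightarrow> (nat \<Rightarrow> complex) \<Rightarrow> complex poly" where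
  "PP J w = (\<Prod>n\<in>J. [:- w n, 1:])"
definition PT :: "nat set \<Rightarrow> (nat \<Rightarrow> complex) \<Rightarrow> (nat \<Rightarrow> complex) \<Rightarrow> complex poly" where
  "PT I w v = (\<Sum>n\<in>I. smult (- v n) (PP (I - {n}) w))"
definition PTT :: "nat set \<Rightarrow> (nat \<Rightarrow> complex) \<Rightarrow> (nat \<Rightarrow> complex) \<Rightarrow> complex poly" where
  "PTT I w v = (\<Sum>n\<in>I. \<Sum>m\<in>I - {n}. smult (v n * v m) (PP (I - {n} - {m}) w))"
definition PU :: "nat set \<Rightarrow> (nat \<Rightarrow> complex) \<Rightarrow> (nat \<Rightarrow> complex) \<Rightarrow> complex poly" where
  "PU I w u = (\<Sum>n\<in>I. smult (u n) (PP (I - {n}) w))"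
definition QQ :: "complex \<Rightarrow> complex poly \<Rightarrow> complex poly \<Rightarrow> complex poly \<Rightarrow> complex poly" where
  "QQ a P Pt Ptt = Ptt * (pderiv P)^2 + smult (1 - a) (pderiv (pderiv P) * Pt^2 - pderiv P * pderiv (Pt^2))"

lemma poly_PP: "poly (PP J w) x = (\<Prod>n\<in>J. x - w n)"
  by (simp add: PP_def poly_prod)

lemma PP_remove: "finite J \<Longrightarrow> m \<in> J \<Longrightarrow> PP J w = [:- w m, 1:] * PP (J - {m}) w"
  unfolding PP_def by (simp add: prod.remove)

lemma degree_PP: "finite J \<Longrightarrow> degree (PP J w) = card J"
  unfolding PP_def by (subst degree_prod_eq_sum_degree) auto

lemma PP_nz: "PP J w \<noteq> 0"
  unfolding PP_def by (cases "finite J") (auto simp: prod_zero_iff)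

lemma smult_sum_right: "smult c (\<Sum>i\<in>S. f i) = (\<Sum>i\<in>S. smult c (f i))"
  by (induction S rule: infinite_finite_induct) (auto simp: smult_add_right)

lemma swap2:
  assumes "finite I"
  shows "(\<Sum>n\<in>I. \<Sum>m\<in>I - {n}. f n m) = (\<Sum>n\<in>I. \<Sum>m\<in>I - {n}. (f m n :: 'a::comm_monoid_add))"
proof -
  have e: "\<And>n. I - {n} = {m. m \<in> I \<and> n \<noteq> m}" by auto
  have e2: "\<And>n. I - {n} = {m. m \<in> I \<and> m \<noteq> n}" by auto
  show ?thesis unfolding e using sum.swap_restrict[OF assms assms, of f "\<lambda>x y. x \<noteq> y"]
    by (simp add: e2[symmetric] e[symmetric])
qed

lemma PU_sym:
  assumes fin: "finite I" and inj: "inj_on w I"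
    and u: "\<And>n. n \<in> I \<Longrightarrow> u n = 2 * (\<Sum>m\<in>I - {n}. a * v n * v m / (w n - w m))"
  shows "PU I w u = smult a (PTT I w v)"
proof -
  define g where "g n m = smult (2 * a * v n * v m / (w n - w m)) ([:- w m, 1:] * PP (I - {n} - {m}) w)" for n m
  have "PU I w u = (\<Sum>n\<in>I. \<Sum>m\<in>I - {n}. g n m)"
    unfolding PU_def g_def
    apply (rule sum.cong[OF refl])
    apply (subst u, assumption)
    apply (simp add: smult_sum sum_distrib_left mult.assoc)
    apply (rule sum.cong[OF refl])
    apply (subst PP_remove[of "I - {_}"])
    using fin by auto
  moreover have "(\<Sum>n\<in>I. \<Sum>m\<in>I - {n}. g n m) = (\<Sum>n\<in>I. \<Sum>m\<in>I - {n}. g m n)"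
    by (rule swap2[OF fin])
  moreover have "(\<Sum>n\<in>I. \<Sum>m\<in>I - {n}. g n m) + (\<Sum>n\<in>I. \<Sum>m\<in>I - {n}. g m n)
      = smult 2 (smult a (PTT I w v))"
  proof -
    have "g n m + g m n = smult (2 * a * (v n * v m)) (PP (I - {n} - {m}) w)" if "n \<in> I" "m \<in> I - {n}" for n m
    proof -
      have d: "w n - w m \<noteq> 0" using inj that by (auto dest: inj_onD)
      have s: "I - {m} - {n} = I - {n} - {m}" by auto
      show ?thesis
      proof -
        define c where "c = 2*a * v n * v m/(w n - w m)"
        define X where "X = PP (I - {n} - {m}) w"
        have c': "2*a * v m * v n/(w m - w n) = - c" unfolding c_def using d
          by (simp add: field_simps)
        have cc: "c * (w n - w m) = 2 * a * (v n * v m)" unfolding c_def using d by simp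
        have "smult c ([:- w m, 1:] * X) + smult (- c) ([:- w n, 1:] * X) = smult (c * (w n - w m)) X"
          by (simp add: poly_eq_poly_eq_iff[symmetric] fun_eq_iff algebra_simps)
        then show ?thesis unfolding g_def s c' cc X_def[symmetric] c_def[symmetric] .
      qed
    qed
    then have "(\<Sum>n\<in>I. \<Sum>m\<in>I - {n}. g n m + g m n) = (\<Sum>n\<in>I. \<Sum>m\<in>I - {n}. smult (2 * a * (v n * v m)) (PP (I - {n} - {m}) w))"
      by (intro sum.cong refl) auto
    then show ?thesis
      by (simp add: sum.distrib[symmetric] PTT_def smult_sum_right mult.assoc)
  qed
  ultimately have "PU I w u + PU I w u = smult 2 (smult a (PTT I w v))" by simp
  then have "smult 2 (PU I w u) = smult 2 (smult a (PTT I w v))"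
    using smult_add_left[of 1 1 "PU I w u"] by simp
  then have "smult (1/2) (smult 2 (PU I w u)) = smult (1/2) (smult 2 (smult a (PTT I w v)))" by simp
  then show ?thesis by simp
qed

lemma PT_decomp:
  assumes fin: "finite I" and k: "k \<in> I"
  shows "PT I w v = smult (- v k) (PP (I - {k}) w)
     + [:- w k, 1:] * (\<Sum>n\<in>I - {k}. smult (- v n) (PP (I - {n} - {k}) w))"
proof -
  have "PT I w v = smult (- v k) (PP (I - {k}) w) + (\<Sum>n\<in>I - {k}. smult (- v n) (PP (I - {n}) w))"
    unfolding PT_def using fin k by (simp add: sum.remove)
  also have "(\<Sum>n\<in>I - {k}. smult (- v n) (PP (I - {n}) w))
     = (\<Sum>n\<in>I - {k}. [:- w k, 1:] * smult (- v n) (PP (I - {n} - {k}) w))"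
  proof (intro sum.cong refl)
    fix n assume "n \<in> I - {k}"
    then have "PP (I - {n}) w = [:- w k, 1:] * PP (I - {n} - {k}) w"
      using fin k by (intro PP_remove) auto
    then show "smult (- v n) (PP (I - {n}) w) = [:- w k, 1:] * smult (- v n) (PP (I - {n} - {k}) w)"
      by (simp add: mult_smult_right)
  qed
  finally show ?thesis by (simp add: sum_distrib_left)
qed

lemma PTT_eval:
  assumes fin: "finite I" and k: "k \<in> I"
  shows "poly (PTT I w v) (w k) = 2 * v k * (\<Sum>n\<in>I - {k}. v n * poly (PP (I - {n} - {k}) w) (w k))"
proof -
  define F where "F n m = v n * v m * poly (PP (I - {n} - {m}) w) (w k)" for n m
  have z: "F n m = 0" if "n \<in> I" "m \<in> I" "n \<noteq> k" "m \<noteq> k" for n m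
    unfolding F_def poly_PP using that fin k
    by (auto intro!: prod_zero bexI[of _ k])
  have "poly (PTT I w v) (w k) = (\<Sum>n\<in>I. \<Sum>m\<in>I - {n}. F n m)"
    unfolding PTT_def F_def by (simp add: poly_sum)
  also have "\<dots> = (\<Sum>m\<in>I - {k}. F k m) + (\<Sum>n\<in>I - {k}. \<Sum>m\<in>I - {n}. F n m)"
    using fin k by (simp add: sum.remove)
  also have "(\<Sum>n\<in>I - {k}. \<Sum>m\<in>I - {n}. F n m) = (\<Sum>n\<in>I - {k}. F k n)"
  proof (intro sum.cong refl)
    fix n assume n: "n \<in> I - {k}"
    have "(\<Sum>m\<in>I - {n}. F n m) = F n k + (\<Sum>m\<in>I - {n} - {k}. F n m)"
      using fin k n by (subst sum.remove[of _ k]) auto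
    also have "(\<Sum>m\<in>I - {n} - {k}. F n m) = 0"
      using n z by (intro sum.neutral) auto
    also have "F n k = F k n" unfolding F_def
      by (simp add: Diff_insert2[symmetric] insert_commute)
    finally show "(\<Sum>m\<in>I - {n}. F n m) = F k n" by simp
  qed
  moreover have sw: "\<And>n. I - {k} - {n} = I - {n} - {k}" by auto
  ultimately show ?thesis
    unfolding F_def sw by (simp add: sum_distrib_left mult_ac)
qed

lemma QQ_root:
  assumes fin: "finite I" and k: "k \<in> I"
  shows "poly (QQ a (PP I w) (PT I w v) (smult (1 - a) (PTT I w v))) (w k) = 0"
proof -
  define A where "A = PP (I - {k}) w"
  define B where "B = (\<Sum>n\<in>I - {k}. smult (- v n) (PP (I - {n} - {k}) w))"
  define L where "L = [:- w k, 1:]"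
  have hP: "PP I w = L * A" unfolding L_def A_def using fin k by (rule PP_remove)
  have hT: "PT I w v = smult (- v k) A + L * B" unfolding L_def A_def B_def using fin k by (rule PT_decomp)
  have hTT: "poly (PTT I w v) (w k) = - 2 * v k * poly B (w k)"
    unfolding B_def using PTT_eval[OF fin k] by (simp add: poly_sum sum_negf)
  have L0: "poly L (w k) = 0" and dL: "pderiv L = 1" unfolding L_def by (simp_all add: pderiv_pCons)
  show ?thesis
  proof -
    define T where "T = smult (- v k) A + L * B"
    have e1: "poly (pderiv (L*A)) (w k) = poly A (w k)"
      by (simp add: pderiv_mult L0 dL)
    have e2: "poly (pderiv (pderiv (L*A))) (w k) = 2 * poly (pderiv A) (w k)"
      by (simp add: pderiv_mult pderiv_add L0 dL)
    have e3: "poly T (w k) = - v k * poly A (w k)"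
      by (simp add: T_def L0)
    have e4: "poly (pderiv T) (w k) = - v k * poly (pderiv A) (w k) + poly B (w k)"
      by (simp add: T_def pderiv_mult pderiv_add pderiv_diff pderiv_smult L0 dL)
    have e5: "pderiv (T^2) = smult 2 T * pderiv T"
      by (simp add: pderiv_power)
    have "poly (QQ a (L * A) T (smult (1 - a) (PTT I w v))) (w k)
      = (1 - a) * (- 2 * v k * poly B (w k)) * (poly A (w k))^2
        + (1 - a) * (2 * poly (pderiv A) (w k) * (- v k * poly A (w k))^2
           - poly A (w k) * (2 * (- v k * poly A (w k)) * (- v k * poly (pderiv A) (w k) + poly B (w k))))"
      unfolding QQ_def e5 by (simp add: e1 e2 e3 e4 hTT)
    also have "\<dots> = 0" by (simp add: algebra_simps power2_eq_square)
    finally show ?thesis unfolding hP hT T_def .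
  qed
qed


lemma PP_dvd:
  assumes "finite I" "inj_on w I" "\<And>k. k \<in> I \<Longrightarrow> poly Q (w k) = 0"
  shows "PP I w dvd Q"
  using assms
proof (induction I rule: finite_induct)
  case empty
  then show ?case by (simp add: PP_def)
next
  case (insert x F)
  have "PP F w dvd Q" using insert by (simp add: inj_on_insert)
  then obtain R where R: "Q = PP F w * R" by (elim dvdE)
  have nz: "poly (PP F w) (w x) \<noteq> 0"
    using insert.hyps insert.prems(1) unfolding poly_PP by (auto simp: prod_zero_iff inj_on_def)
  have "poly Q (w x) = 0" using insert.prems by simp
  then have "poly R (w x) = 0" using nz R by simp
  then have "[:- w x, 1:] dvd R" by (simp add: poly_eq_0_iff_dvd)
  then have "[:- w x, 1:] * PP F w dvd PP F w * R" by (metis mult.commute mult_dvd_mono dvd_refl)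
  moreover have "PP (insert x F) w = [:- w x, 1:] * PP F w"
    using insert.hyps by (simp add: PP_def)
  ultimately show ?case using R by simp
qed

lemma degree_mult_le2: "degree p \<le> a \<Longrightarrow> degree q \<le> b \<Longrightarrow> c \<ge> a + b \<Longrightarrow> degree (p * q) \<le> c"
  using degree_mult_le[of p q] by linarith

lemma degree_QQ:
  assumes fin: "finite I" and N: "card I = N" "N \<ge> 2"
  shows "degree (QQ a (PP I w) (PT I w v) (smult (1 - a) (PTT I w v))) \<le> 3 * N - 4"
proof -
  have dP: "degree (PP I w) = N" using degree_PP[OF fin] N by simp
  have dT: "degree (PT I w v) \<le> N - 1"
    unfolding PT_def
  proof (intro degree_sum_le fin)
    fix n assume "n \<in> I"
    then have "degree (PP (I - {n}) w) = N - 1" using fin N by (simp add: degree_PP)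
    then show "degree (smult (- v n) (PP (I - {n}) w)) \<le> N - 1" using degree_smult_le by metis
  qed
  have dTT: "degree (smult (1 - a) (PTT I w v)) \<le> N - 2"
    unfolding PTT_def
  proof (rule order.trans[OF degree_smult_le], rule degree_sum_le[OF fin], rule degree_sum_le)
    fix n m assume "n \<in> I" "m \<in> I - {n}"
    then have "degree (PP (I - {n} - {m}) w) = N - 2" using fin N by (simp add: degree_PP)
    then show "degree (smult (v n * v m) (PP (I - {n} - {m}) w)) \<le> N - 2" using degree_smult_le by metis
  qed (use fin in auto)
  define P T where "P = PP I w" and "T = PT I w v"
  have d1: "degree (pderiv P) = N - 1" using dP by (simp add: degree_pderiv P_def)
  have d2: "degree (pderiv (pderiv P)) = N - 2" using d1 by (simp add: degree_pderiv)
  have dT2: "degree (T^2) \<le> 2 * N - 2"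
    using order.trans[OF degree_power_le, of T 2] dT unfolding T_def by simp
  have dT2': "degree (pderiv (T^2)) \<le> 2 * N - 3"
    using dT2 by (simp add: degree_pderiv)
  have t1: "degree (smult (1 - a) (PTT I w v) * (pderiv P)^2) \<le> 3 * N - 4"
  proof -
    have "degree ((pderiv P)^2) \<le> 2 * N - 2" using order.trans[OF degree_power_le, of "pderiv P" 2] d1 by simp
    then show ?thesis using dTT N by (intro degree_mult_le2) auto
  qed
  have t2: "degree (pderiv (pderiv P) * T^2) \<le> 3 * N - 4"
    using d2 dT2 N by (intro degree_mult_le2) auto
  have t3: "degree (pderiv P * pderiv (T^2)) \<le> 3 * N - 4"
    using d1 dT2' N by (intro degree_mult_le2) auto
  show ?thesis
    unfolding QQ_def P_def[symmetric] T_def[symmetric]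
    by (intro degree_add_le t1 order.trans[OF degree_smult_le] degree_diff_le t2 t3)
qed


theorem lemmaD1:
  fixes N :: nat and a :: complex and z :: "nat \<Rightarrow> complex \<Rightarrow> complex" and S :: "complex set"
  assumes N2: "N \<ge> 2"
    and S_open: "open S"
    and hol: "\<And>n. n \<in> {1..N} \<Longrightarrow> z n holomorphic_on S"
    and distinct: "\<And>n m \<tau>. n \<in> {1..N} \<Longrightarrow> m \<in> {1..N} \<Longrightarrow> n \<noteq> m \<Longrightarrow> \<tau> \<in> S \<Longrightarrow> z n \<tau> \<noteq> z m \<tau>"
    and ode: "\<And>n \<tau>. n \<in> {1..N} \<Longrightarrow> \<tau> \<in> S \<Longrightarrow>
        deriv (deriv (z n)) \<tau> =
          2 * (\<Sum>m\<in>{1..N} - {n}. a * deriv (z n) \<tau> * deriv (z m) \<tau> / (z n \<tau> - z m \<tau>))"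
  shows "\<exists>\<Psi> :: complex \<Rightarrow> complex poly.
           \<forall>\<tau>\<in>S. degree (\<Psi> \<tau>) \<le> 2 * N - 4 \<and>
             (\<forall>\<zeta>.
                deriv (\<lambda>t. deriv (\<lambda>s. Pi_poly N z \<zeta> s) t) \<tau> * (deriv (\<lambda>x. Pi_poly N z x \<tau>) \<zeta>)\<^sup>2
                + (1 - a) * ( deriv (\<lambda>x. deriv (\<lambda>y. Pi_poly N z y \<tau>) x) \<zeta> * (deriv (\<lambda>s. Pi_poly N z \<zeta> s) \<tau>)\<^sup>2
                              - deriv (\<lambda>x. Pi_poly N z x \<tau>) \<zeta> * deriv (\<lambda>x. (deriv (\<lambda>s. Pi_poly N z x s) \<tau>)\<^sup>2) \<zeta>)
                = poly (\<Psi> \<tau>) \<zeta> * Pi_poly N z \<zeta> \<tau>)"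
proof -
  define I where "I = {1..N}"
  have fin: "finite I" unfolding I_def by simp
  have cardI: "card I = N" unfolding I_def by simp
  have d1: "(z n has_field_derivative deriv (z n) s) (at s)" if "n \<in> I" "s \<in> S" for n s
    using hol[of n] that S_open unfolding I_def by (intro holomorphic_derivI) auto
  have d2: "(deriv (z n) has_field_derivative deriv (deriv (z n)) s) (at s)" if "n \<in> I" "s \<in> S" for n s
    using hol[of n] that S_open unfolding I_def by (intro holomorphic_derivI holomorphic_deriv) auto
  define D1 where "D1 x s = (\<Sum>n\<in>I. (- deriv (z n) s) * (\<Prod>m\<in>I - {n}. x - z m s))" for x s
  have hD1: "((\<lambda>s. Pi_poly N z x s) has_field_derivative D1 x s) (at s)" if "s \<in> S" for x s
  proof -
    have "((\<lambda>s. \<Prod>n\<in>I. x - z n s) has_field_derivative D1 x s) (at s)"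
      unfolding D1_def
      by (rule has_field_derivative_prod) (auto intro!: derivative_eq_intros d1 that)
    then show ?thesis unfolding Pi_poly_def I_def .
  qed
  define D2 where "D2 x \<tau> = (\<Sum>n\<in>I. (- deriv (deriv (z n)) \<tau>) * (\<Prod>m\<in>I - {n}. x - z m \<tau>)
      + (\<Sum>m\<in>I - {n}. (- deriv (z m) \<tau>) * (\<Prod>l\<in>I - {n} - {m}. x - z l \<tau>)) * (- deriv (z n) \<tau>))" for x \<tau>
  have hD2: "(D1 x has_field_derivative D2 x \<tau>) (at \<tau>)" if "\<tau> \<in> S" for x \<tau>
  proof -
    have "((\<lambda>s. \<Sum>n\<in>I. (- deriv (z n) s) * (\<Prod>m\<in>I - {n}. x - z m s)) has_field_derivative D2 x \<tau>) (at \<tau>)"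
      unfolding D2_def
    proof (rule DERIV_sum, rule DERIV_mult)
      fix n assume n: "n \<in> I"
      show "((\<lambda>s. - deriv (z n) s) has_field_derivative - deriv (deriv (z n)) \<tau>) (at \<tau>)"
        using d2[OF n that] by (rule DERIV_minus)
      show "((\<lambda>s. \<Prod>m\<in>I - {n}. x - z m s) has_field_derivative
          (\<Sum>m\<in>I - {n}. (- deriv (z m) \<tau>) * (\<Prod>l\<in>I - {n} - {m}. x - z l \<tau>))) (at \<tau>)"
        by (rule has_field_derivative_prod) (auto intro!: derivative_eq_intros d1 that)
    qed
    then show ?thesis unfolding D1_def[abs_def] .
  qed
  define w where "w \<tau> = (\<lambda>n. z n \<tau>)" for \<tau>
  define v where "v \<tau> = (\<lambda>n. deriv (z n) \<tau>)" for \<tau>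
  define u where "u \<tau> = (\<lambda>n. deriv (deriv (z n)) \<tau>)" for \<tau>
  define Q where "Q \<tau> = QQ a (PP I (w \<tau>)) (PT I (w \<tau>) (v \<tau>)) (smult (1 - a) (PTT I (w \<tau>) (v \<tau>)))" for \<tau>
  show ?thesis
  proof (intro exI[of _ "\<lambda>\<tau>. Q \<tau> div PP I (w \<tau>)"] ballI conjI allI)
    fix \<tau> assume \<tau>: "\<tau> \<in> S"
    have inj: "inj_on (w \<tau>) I"
      using distinct \<tau> unfolding inj_on_def w_def I_def by blast
    have dvd: "PP I (w \<tau>) dvd Q \<tau>"
      unfolding Q_def using fin inj by (intro PP_dvd QQ_root) auto
    then obtain R where R: "Q \<tau> = PP I (w \<tau>) * R" by (elim dvdE)
    have PPnz: "PP I (w \<tau>) \<noteq> 0" by (rule PP_nz)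
    have Rdiv: "Q \<tau> div PP I (w \<tau>) = R" using R PPnz by simp
    have degQ: "degree (Q \<tau>) \<le> 3 * N - 4"
      unfolding Q_def using degree_QQ[OF fin cardI N2] by simp
    show "degree (Q \<tau> div PP I (w \<tau>)) \<le> 2 * N - 4"
    proof (cases "R = 0")
      case True then show ?thesis using Rdiv by simp
    next
      case False
      then have "degree (Q \<tau>) = N + degree R"
        using R PPnz degree_PP[OF fin] cardI by (simp add: degree_mult_eq)
      then show ?thesis unfolding Rdiv using degQ by linarith
    qed
    fix \<zeta>
    have ePi: "(\<lambda>x. Pi_poly N z x \<tau>) = poly (PP I (w \<tau>))"
      by (simp add: fun_eq_iff poly_PP Pi_poly_def w_def I_def)
    have eD1: "deriv (\<lambda>s. Pi_poly N z x s) t = D1 x t" if "t \<in> S" for x t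
      using hD1[OF that] by (rule DERIV_imp_deriv)
    have eT: "(\<lambda>x. deriv (\<lambda>s. Pi_poly N z x s) \<tau>) = poly (PT I (w \<tau>) (v \<tau>))"
      by (simp add: fun_eq_iff eD1[OF \<tau>] D1_def PT_def poly_sum poly_PP w_def v_def)
    have eTT: "deriv (\<lambda>t. deriv (\<lambda>s. Pi_poly N z \<zeta> s) t) \<tau> = D2 \<zeta> \<tau>"
    proof -
      have "deriv (\<lambda>t. deriv (\<lambda>s. Pi_poly N z \<zeta> s) t) \<tau> = deriv (D1 \<zeta>) \<tau>"
        using S_open \<tau> by (intro deriv_cong_ev) (auto simp: eD1 eventually_nhds_in_open[THEN eventually_mono])
      then show ?thesis using hD2[OF \<tau>] by (simp add: DERIV_imp_deriv)
    qed
    have eD2: "D2 \<zeta> \<tau> = poly (PTT I (w \<tau>) (v \<tau>) - PU I (w \<tau>) (u \<tau>)) \<zeta>"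
      unfolding D2_def PTT_def PU_def
      by (simp add: poly_sum poly_PP w_def v_def u_def sum.distrib sum_distrib_left
            sum_subtractf[symmetric] algebra_simps)
    have PU: "PU I (w \<tau>) (u \<tau>) = smult a (PTT I (w \<tau>) (v \<tau>))"
      using fin inj by (rule PU_sym) (use ode \<tau> in \<open>simp add: u_def v_def w_def I_def\<close>)
    have "PTT I (w \<tau>) (v \<tau>) - PU I (w \<tau>) (u \<tau>) = smult (1 - a) (PTT I (w \<tau>) (v \<tau>))"
      unfolding PU by (simp add: smult_diff_left)
    note eTT' = eTT[unfolded eD2 this]
    have LHS: "deriv (\<lambda>t. deriv (\<lambda>s. Pi_poly N z \<zeta> s) t) \<tau> * (deriv (\<lambda>x. Pi_poly N z x \<tau>) \<zeta>)\<^sup>2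
                + (1 - a) * ( deriv (\<lambda>x. deriv (\<lambda>y. Pi_poly N z y \<tau>) x) \<zeta> * (deriv (\<lambda>s. Pi_poly N z \<zeta> s) \<tau>)\<^sup>2
                              - deriv (\<lambda>x. Pi_poly N z x \<tau>) \<zeta> * deriv (\<lambda>x. (deriv (\<lambda>s. Pi_poly N z x s) \<tau>)\<^sup>2) \<zeta>)
           = poly (Q \<tau>) \<zeta>"
    proof -
      have a1: "deriv (\<lambda>x. Pi_poly N z x \<tau>) y = poly (pderiv (PP I (w \<tau>))) y" for y
        unfolding ePi by (rule DERIV_imp_deriv[OF poly_DERIV])
      have a2: "deriv (\<lambda>x. deriv (\<lambda>y. Pi_poly N z y \<tau>) x) \<zeta> = poly (pderiv (pderiv (PP I (w \<tau>)))) \<zeta>"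
        unfolding a1 by (rule DERIV_imp_deriv[OF poly_DERIV])
      have a3: "deriv (\<lambda>s. Pi_poly N z \<zeta> s) \<tau> = poly (PT I (w \<tau>) (v \<tau>)) \<zeta>"
        using fun_cong[OF eT, of \<zeta>] by simp
      have e3: "(\<lambda>x. (deriv (\<lambda>s. Pi_poly N z x s) \<tau>)\<^sup>2) = poly ((PT I (w \<tau>) (v \<tau>))\<^sup>2)"
        using fun_cong[OF eT] by (simp add: fun_eq_iff)
      have a4: "deriv (\<lambda>x. (deriv (\<lambda>s. Pi_poly N z x s) \<tau>)\<^sup>2) \<zeta> = poly (pderiv ((PT I (w \<tau>) (v \<tau>))\<^sup>2)) \<zeta>"
        unfolding e3 by (rule DERIV_imp_deriv[OF poly_DERIV])
      have dp: "deriv (poly p) y = poly (pderiv p) y" for p y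
        by (rule DERIV_imp_deriv[OF poly_DERIV])
      show ?thesis unfolding a1 a2 a3 a4 eTT' Q_def QQ_def by (simp add: dp)
    qed
    have "poly (Q \<tau>) \<zeta> = poly (Q \<tau> div PP I (w \<tau>)) \<zeta> * Pi_poly N z \<zeta> \<tau>"
      using fun_cong[OF ePi, of \<zeta>] Rdiv R by simp
    then show "deriv (\<lambda>t. deriv (\<lambda>s. Pi_poly N z \<zeta> s) t) \<tau> * (deriv (\<lambda>x. Pi_poly N z x \<tau>) \<zeta>)\<^sup>2
                + (1 - a) * ( deriv (\<lambda>x. deriv (\<lambda>y. Pi_poly N z y \<tau>) x) \<zeta> * (deriv (\<lambda>s. Pi_poly N z \<zeta> s) \<tau>)\<^sup>2
                              - deriv (\<lambda>x. Pi_poly N z x \<tau>) \<zeta> * deriv (\<lambda>x. (deriv (\<lambda>s. Pi_poly N z x s) \<tau>)\<^sup>2) \<zeta>)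
                = poly (Q \<tau> div PP I (w \<tau>)) \<zeta> * Pi_poly N z \<zeta> \<tau>"
      using LHS by simp
  qed
qed

end
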